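(* Let $n\geq 1$ and let $Q\in\mathbb{Q}^{n\times n}$ be a rational orthogonal matrix with level $\ell$, and let $d_1,\ldots,d_n$ be the diagonal entries of the Smith normal form of the integer matrix $\ell Q$. Suppose that $X$ is a random symmetric integer $n\times n$ matrix whose upper-triangular entries $\{X_{i,j}:i\leq j\}$ have independent and uniformly distributed reductions to $\mathbb{Z}/\ell^2\mathbb{Z}$. Then $$\mathbb{P}(Q^{T}XQ\in\mathbb{Z}^{n\times n})=\prod_{i=1}^{\lfloor n/2\rfloor}\prod_{j=i}^{n-i}\frac{d_id_j}{\ell^2}.$$
   Context: The level of a rational matrix $Q$ is the least integer $\ell\geq 1$ with $\ell Q\in\mathbb{Z}^{n\times n}$. The Smith normal form entries $d_1,\ldots,d_n$ are taken to be nonnegative integers with $d_1\mid d_2\mid\cdots\mid d_n$, so that the Smith ideals of $\ell Q$ over $\mathbb{Z}$ are $d_i\mathbb{Z}$. *)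

theory Defs
  imports "Jordan_Normal_Form.Matrix" "HOL-Probability.Probability"
begin

definition integral_mat :: "nat \<Rightarrow> rat mat \<Rightarrow> bool" where
  "integral_mat n Q \<longleftrightarrow> (\<forall>i<n. \<forall>j<n. Q $$ (i,j) \<in> \<int>)"

definition level :: "nat \<Rightarrow> rat mat \<Rightarrow> nat" where
  "level n Q = (LEAST l. l \<ge> 1 \<and> integral_mat n (of_nat l \<cdot>\<^sub>m Q))"

definition orthogonal_rat_mat :: "nat \<Rightarrow> rat mat \<Rightarrow> bool" where
  "orthogonal_rat_mat n Q \<longleftrightarrow> Q \<in> carrier_mat n n \<and> transpose_mat Q * Q = 1\<^sub>m n"

definition unimodular :: "nat \<Rightarrow> int mat \<Rightarrow> bool" where
  "unimodular n P \<longleftrightarrow> P \<in> carrier_mat n n \<and>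
     (\<exists>P' \<in> carrier_mat n n. P * P' = 1\<^sub>m n \<and> P' * P = 1\<^sub>m n)"

definition smith_diag :: "nat \<Rightarrow> int mat \<Rightarrow> (nat \<Rightarrow> int) \<Rightarrow> bool" where
  "smith_diag n M d \<longleftrightarrow>
     (\<forall>i\<in>{1..n}. d i \<ge> 0) \<and> (\<forall>i. 1 \<le> i \<and> i < n \<longrightarrow> d i dvd d (Suc i)) \<and>
     (\<exists>P R. unimodular n P \<and> unimodular n R \<and>
        P * M * R = Matrix.mat n n (\<lambda>(i,j). if i = j then d (Suc i) else 0))"

end

theory Submission
  imports Defs "HOL-Number_Theory.Cong"
begin

lemma card_dvd_mult:
  fixes m c :: int assumes m: "m > 0"
  shows "card {x\<in>{0..<m}. m dvd c*x} = nat (gcd c m)"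
proof -
  define g where "g = gcd c m"
  have g: "g > 0" using m by (simp add: g_def)
  define m' where "m' = m div g"
  define c' where "c' = c div g"
  have mm: "m = g * m'" unfolding m'_def g_def by simp
  have cc: "c = g * c'" unfolding c'_def g_def by simp
  have m'pos: "m' > 0" using m g mm by (simp add: zero_less_mult_iff)
  have cop: "coprime c' m'" unfolding c'_def m'_def g_def
    by (rule div_gcd_coprime) (use m in auto)
  have iff: "m dvd c * x \<longleftrightarrow> m' dvd x" for x
  proof -
    have "m dvd c * x \<longleftrightarrow> g * m' dvd g * (c' * x)" by (simp add: mm cc mult.assoc)
    also have "\<dots> \<longleftrightarrow> m' dvd c' * x" using g by simp
    also have "\<dots> \<longleftrightarrow> m' dvd x" using cop by (simp add: coprime_commute coprime_dvd_mult_right_iff)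
    finally show ?thesis .
  qed
  have "{x\<in>{0..<m}. m dvd c*x} = (\<lambda>k. m' * k) ` {0..<g}"
  proof (intro Set.set_eqI iffI)
    fix x assume "x \<in> {x\<in>{0..<m}. m dvd c*x}"
    then have x: "0 \<le> x" "x < m" "m' dvd x" using iff by auto
    then obtain k where k: "x = m' * k" by (auto elim: dvdE)
    have "0 \<le> k" using x(1) k m'pos by (simp add: zero_le_mult_iff)
    moreover have "k < g" using x(2) k mm m'pos by (metis mult.commute mult_less_cancel_left_pos)
    ultimately show "x \<in> (\<lambda>k. m' * k) ` {0..<g}" using k by (intro image_eqI[where x=k]) auto
  next
    fix x assume "x \<in> (\<lambda>k. m' * k) ` {0..<g}"
    then obtain k where k: "x = m' * k" "0 \<le> k" "k < g" unfolding image_iff by (elim bexE) auto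
    have "m' * k < m' * g" using k m'pos by simp
    then show "x \<in> {x\<in>{0..<m}. m dvd c*x}" using k iff m'pos mm
      by (auto simp: mult.commute)
  qed
  moreover have "inj_on (\<lambda>k. m' * k) {0..<g}" using m'pos by (auto simp: inj_on_def)
  ultimately show ?thesis by (simp add: card_image g_def)
qed

lemma chain_dvd:
  fixes d :: "nat \<Rightarrow> int"
  assumes ch: "\<forall>i. 1 \<le> i \<and> i < n \<longrightarrow> d i dvd d (Suc i)"
    and "1 \<le> a" "a \<le> b" "b \<le> n"
  shows "d a dvd d b"
  using assms(3,4)
proof (induction b rule: dec_induct)
  case base then show ?case by simp
next
  case (step b)
  then have "d b dvd d (Suc b)" using ch assms(2) by auto
  then show ?case using step by (meson dvd_trans Suc_leD)
qed

lemma prod_le_const_eq: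
  fixes f :: "nat \<Rightarrow> int"
  assumes S: "finite S" "k \<in> S" and b: "\<forall>i\<in>S. 0 < f i \<and> f i \<le> c"
    and eq: "(\<Prod>i\<in>S. f i) = c ^ card S"
  shows "f k = c"
proof (rule ccontr)
  assume ne: "f k \<noteq> c"
  then have lt: "f k < c" using b S by force
  have "(\<Prod>i\<in>S-{k}. f i) \<le> (\<Prod>i\<in>S-{k}. c)"
    using b by (intro prod_mono) auto
  also have "\<dots> = c ^ (card S - 1)" using S by simp
  finally have le: "(\<Prod>i\<in>S-{k}. f i) \<le> c ^ (card S - 1)" .
  have pos: "(\<Prod>i\<in>S-{k}. f i) > 0" using b by (intro prod_pos) auto
  have "(\<Prod>i\<in>S. f i) = f k * (\<Prod>i\<in>S-{k}. f i)" using S by (simp add: prod.remove)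
  also have "\<dots> < c * (\<Prod>i\<in>S-{k}. f i)" using lt pos by simp
  also have "\<dots> \<le> c * c ^ (card S - 1)" using le b S lt
    by (intro mult_left_mono) auto
  also have "\<dots> = c ^ card S" using S
    by (metis card_gt_0_iff empty_iff power_eq_if neq0_conv)
  finally show False using eq by simp
qed

lemma chain_key:
  fixes a b :: "nat \<Rightarrow> int"
  assumes pa: "\<forall>i\<in>{1..n}. a i > 0" and pb: "\<forall>i\<in>{1..n}. b i > 0"
    and cha: "\<forall>i. 1 \<le> i \<and> i < n \<longrightarrow> a i dvd a (Suc i)"
    and eq: "\<forall>m>0. (\<Prod>i\<in>{1..n}. gcd (a i) m) = (\<Prod>i\<in>{1..n}. gcd (b i) m)"
    and prev: "\<forall>i\<in>{1..<k}. a i = b i" and k: "k \<in> {1..n}"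
  shows "a k dvd b k"
proof -
  have split: "{1..n} = {1..<k} \<union> {k..n}" using k by auto
  have disj: "{1..<k} \<inter> {k..n} = {}" by auto
  have ak: "a k > 0" using pa k by auto
  have "(\<Prod>i\<in>{1..n}. gcd (a i) (a k)) = (\<Prod>i\<in>{1..<k}. gcd (a i) (a k)) * (\<Prod>i\<in>{k..n}. gcd (a i) (a k))"
    unfolding split by (rule prod.union_disjoint) (auto)
  also have "(\<Prod>i\<in>{k..n}. gcd (a i) (a k)) = (\<Prod>i\<in>{k..n}. a k)"
  proof (rule prod.cong)
    fix i assume i: "i \<in> {k..n}"
    have "a k dvd a i" using chain_dvd[OF cha, of k i] i k by auto
    then show "gcd (a i) (a k) = a k" using ak by (simp add: gcd.commute gcd_proj1_iff)
  qed simp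
  finally have e1: "(\<Prod>i\<in>{1..n}. gcd (a i) (a k)) = (\<Prod>i\<in>{1..<k}. gcd (a i) (a k)) * a k ^ card {k..n}"
    by simp
  have "(\<Prod>i\<in>{1..n}. gcd (b i) (a k)) = (\<Prod>i\<in>{1..<k}. gcd (b i) (a k)) * (\<Prod>i\<in>{k..n}. gcd (b i) (a k))"
    unfolding split by (rule prod.union_disjoint) (auto)
  also have "(\<Prod>i\<in>{1..<k}. gcd (b i) (a k)) = (\<Prod>i\<in>{1..<k}. gcd (a i) (a k))"
    using prev by (intro prod.cong) auto
  finally have e2: "(\<Prod>i\<in>{1..n}. gcd (b i) (a k)) = (\<Prod>i\<in>{1..<k}. gcd (a i) (a k)) * (\<Prod>i\<in>{k..n}. gcd (b i) (a k))" .
  have ppos: "(\<Prod>i\<in>{1..<k}. gcd (a i) (a k)) \<noteq> 0"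
    using ak by simp
  have "(\<Prod>i\<in>{k..n}. gcd (b i) (a k)) = a k ^ card {k..n}"
    using e1 e2 eq ak ppos by (metis mult_left_cancel)
  then have "gcd (b k) (a k) = a k"
  proof (rule prod_le_const_eq[rotated 3])
    show "finite {k..n}" "k \<in> {k..n}" using k by auto
    show "\<forall>i\<in>{k..n}. 0 < gcd (b i) (a k) \<and> gcd (b i) (a k) \<le> a k"
      using ak by (auto intro: zdvd_imp_le)
  qed
  then show ?thesis by (metis gcd_dvd1)
qed

lemma chain_unique:
  fixes a b :: "nat \<Rightarrow> int"
  assumes pa: "\<forall>i\<in>{1..n}. a i > 0" and pb: "\<forall>i\<in>{1..n}. b i > 0"
    and cha: "\<forall>i. 1 \<le> i \<and> i < n \<longrightarrow> a i dvd a (Suc i)"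
    and chb: "\<forall>i. 1 \<le> i \<and> i < n \<longrightarrow> b i dvd b (Suc i)"
    and eq: "\<forall>m>0. (\<Prod>i\<in>{1..n}. gcd (a i) m) = (\<Prod>i\<in>{1..n}. gcd (b i) m)"
  shows "k \<in> {1..n} \<Longrightarrow> a k = b k"
proof (induction k rule: less_induct)
  case (less k)
  then have prev: "\<forall>i\<in>{1..<k}. a i = b i" by auto
  have "a k dvd b k" by (rule chain_key[OF pa pb cha eq prev less.prems])
  moreover have "b k dvd a k"
    by (rule chain_key[OF pb pa chb]) (use eq prev less.prems in auto)
  ultimately show ?case using pa pb less.prems by (meson less_le zdvd_antisym_nonneg)
qed

definition mz :: "int \<Rightarrow> nat \<Rightarrow> int mat \<Rightarrow> bool" where
  "mz m n B \<longleftrightarrow> (\<forall>i<n. \<forall>j<n. m dvd B $$ (i,j))"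

definition mc :: "int \<Rightarrow> nat \<Rightarrow> int mat \<Rightarrow> int mat \<Rightarrow> bool" where
  "mc m n B C \<longleftrightarrow> (\<forall>i<n. \<forall>j<n. [B $$ (i,j) = C $$ (i,j)] (mod m))"

lemma mc_refl: "mc m n B B" by (simp add: mc_def)
lemma mc_sym: "mc m n B C \<Longrightarrow> mc m n C B" by (simp add: mc_def cong_sym)
lemma mc_trans: "mc m n B C \<Longrightarrow> mc m n C E \<Longrightarrow> mc m n B E"
  unfolding mc_def by (meson cong_trans)

lemma mult_entry:
  assumes "B \<in> carrier_mat n n" "C \<in> carrier_mat n n" "i < n" "j < n"
  shows "(B * C) $$ (i,j) = (\<Sum>k\<in>{0..<n}. B $$ (i,k) * C $$ (k,j))"
  using assms by (simp add: scalar_prod_def)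

lemma mc_mult_left:
  assumes "B \<in> carrier_mat n n" "B' \<in> carrier_mat n n" "C \<in> carrier_mat n n" "mc m n B B'"
  shows "mc m n (C * B) (C * B')"
  unfolding mc_def
proof (intro allI impI)
  fix i j assume ij: "i < n" "j < n"
  show "[(C * B) $$ (i, j) = (C * B') $$ (i, j)] (mod m)"
    using assms ij unfolding mult_entry[OF assms(3,1) ij] mult_entry[OF assms(3,2) ij] mc_def
    by (intro cong_sum cong_mult) auto
qed

lemma mc_mult_right:
  assumes "B \<in> carrier_mat n n" "B' \<in> carrier_mat n n" "C \<in> carrier_mat n n" "mc m n B B'"
  shows "mc m n (B * C) (B' * C)"
  unfolding mc_def
proof (intro allI impI)
  fix i j assume ij: "i < n" "j < n"
  show "[(B * C) $$ (i, j) = (B' * C) $$ (i, j)] (mod m)"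
    using assms ij unfolding mult_entry[OF assms(1,3) ij] mult_entry[OF assms(2,3) ij] mc_def
    by (intro cong_sum cong_mult) auto
qed

lemma mc_mult3:
  assumes "B \<in> carrier_mat n n" "B' \<in> carrier_mat n n" "C \<in> carrier_mat n n" "E \<in> carrier_mat n n" "mc m n B B'"
  shows "mc m n (C * B * E) (C * B' * E)"
  using assms by (meson mc_mult_left mc_mult_right mult_carrier_mat)

lemma mc_mz: "mc m n B C \<Longrightarrow> mz m n B \<longleftrightarrow> mz m n C"
  unfolding mc_def mz_def by (meson cong_dvd_iff)

lemma mz_mult_left:
  assumes "B \<in> carrier_mat n n" "C \<in> carrier_mat n n" "mz m n B"
  shows "mz m n (C * B)"
  unfolding mz_def
proof (intro allI impI)
  fix i j assume ij: "i < n" "j < n"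
  show "m dvd (C * B) $$ (i, j)"
    using assms ij unfolding mult_entry[OF assms(2,1) ij] mz_def
    by (intro dvd_sum dvd_mult) auto
qed

lemma mz_mult_right:
  assumes "B \<in> carrier_mat n n" "C \<in> carrier_mat n n" "mz m n B"
  shows "mz m n (B * C)"
  unfolding mz_def
proof (intro allI impI)
  fix i j assume ij: "i < n" "j < n"
  show "m dvd (B * C) $$ (i, j)"
    using assms ij unfolding mult_entry[OF assms(1,2) ij] mz_def
    by (intro dvd_sum dvd_mult2) auto
qed

lemma mz_cancel:
  assumes B: "B \<in> carrier_mat n n" and U: "U \<in> carrier_mat n n" "U' \<in> carrier_mat n n" "U' * U = 1\<^sub>m n"
    and V: "V \<in> carrier_mat n n" "V' \<in> carrier_mat n n" "V * V' = 1\<^sub>m n"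
  shows "mz m n (U * B * V) \<longleftrightarrow> mz m n B"
proof
  assume h: "mz m n (U * B * V)"
  have BV: "B * V \<in> carrier_mat n n" using B V by simp
  have "U' * (U * B * V) * V' = U' * (U * (B * V)) * V'"
    using assoc_mult_mat[OF U(1) B V(1)] by simp
  also have "U' * (U * (B * V)) = (U' * U) * (B * V)"
    using assoc_mult_mat[OF U(2) U(1) BV] by simp
  also have "\<dots> = B * V" using U(3) left_mult_one_mat[OF BV] by simp
  also have "B * V * V' = B * (V * V')" using assoc_mult_mat[OF B V(1) V(2)] .
  also have "\<dots> = B" using B V by simp
  finally have e: "U' * (U * B * V) * V' = B" .
  have UBV: "U * B * V \<in> carrier_mat n n" using B U V by simp
  have "mz m n (U' * (U * B * V) * V')"
    by (rule mz_mult_right[OF _ V(2) mz_mult_left[OF UBV U(2) h]]) (use UBV U in simp)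
  then show "mz m n B" using e by simp
next
  assume "mz m n B"
  then have "mz m n (U * B)" by (rule mz_mult_left[OF B U(1)])
  then show "mz m n (U * B * V)" using mz_mult_right[OF _ V(1)] B U by simp
qed

definition symm :: "nat \<Rightarrow> (nat \<times> nat \<Rightarrow> int) \<Rightarrow> int mat" where
  "symm n f = Matrix.mat n n (\<lambda>(i,j). f (min i j, max i j))"

definition full :: "nat \<Rightarrow> (nat \<times> nat \<Rightarrow> int) \<Rightarrow> int mat" where
  "full n f = Matrix.mat n n f"

definition pairs :: "nat \<Rightarrow> (nat \<times> nat) set" where
  "pairs n = {(i,j). i \<le> j \<and> j < n}"

definition sq :: "nat \<Rightarrow> (nat \<times> nat) set" where
  "sq n = {0..<n} \<times> {0..<n}"

definition red :: "int \<Rightarrow> (nat \<times> nat) set \<Rightarrow> int mat \<Rightarrow> (nat \<times> nat \<Rightarrow> int)" where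
  "red m I B = (\<lambda>p\<in>I. B $$ p mod m)"

lemma symm_carrier[simp]: "symm n f \<in> carrier_mat n n" by (simp add: symm_def)
lemma full_carrier[simp]: "full n f \<in> carrier_mat n n" by (simp add: full_def)

lemma symm_transpose[simp]: "transpose_mat (symm n f) = symm n f"
  by (rule eq_matI) (auto simp: symm_def min.commute max.commute)

lemma red_PiE: "m > 0 \<Longrightarrow> red m I B \<in> PiE I (\<lambda>_. {0..<m})"
  by (auto simp: red_def)

lemma mc_symm_red:
  assumes "B \<in> carrier_mat n n" "transpose_mat B = B"
  shows "mc m n (symm n (red m (pairs n) B)) B"
  unfolding mc_def
proof (intro allI impI)
  fix i j assume ij: "i < n" "j < n"
  have tr0: "transpose_mat B $$ (i,j) = B $$ (j,i)" using assms(1) ij by auto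
  then have tr: "B $$ (j,i) = B $$ (i,j)" by (metis assms(2))
  have "B $$ (min i j, max i j) = B $$ (i,j)"
    using tr by (cases "i \<le> j") (auto simp: min_def max_def)
  then show "[symm n (red m (pairs n) B) $$ (i, j) = B $$ (i, j)] (mod m)"
    using ij by (simp add: symm_def red_def pairs_def cong_def min_def max_def)
qed

lemma mc_full_red:
  assumes "B \<in> carrier_mat n n"
  shows "mc m n (full n (red m (sq n) B)) B"
  unfolding mc_def using assms by (auto simp: full_def red_def sq_def cong_def)

lemma symm_inj:
  assumes f: "f \<in> PiE (pairs n) (\<lambda>_. {0..<m})" and g: "g \<in> PiE (pairs n) (\<lambda>_. {0..<m})"
    and "mc m n (symm n f) (symm n g)"
  shows "f = g"
proof (rule PiE_ext[OF f g])
  fix p assume p: "p \<in> pairs n"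
  obtain i j where pij: "p = (i,j)" "i \<le> j" "j < n" using p by (auto simp: pairs_def)
  have "[symm n f $$ (i,j) = symm n g $$ (i,j)] (mod m)"
    using assms(3) pij unfolding mc_def by auto
  then have "[f (i,j) = g (i,j)] (mod m)"
    using pij by (simp add: symm_def min_def max_def)
  moreover have "f (i,j) \<in> {0..<m}" "g (i,j) \<in> {0..<m}" using f g p pij by auto
  ultimately show "f p = g p" using pij by (auto simp: cong_def)
qed

lemma full_inj:
  assumes f: "f \<in> PiE (sq n) (\<lambda>_. {0..<m})" and g: "g \<in> PiE (sq n) (\<lambda>_. {0..<m})"
    and "mc m n (full n f) (full n g)"
  shows "f = g"
proof (rule PiE_ext[OF f g])
  fix p assume p: "p \<in> sq n"
  obtain i j where pij: "p = (i,j)" "i < n" "j < n" using p by (auto simp: sq_def)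
  have "[f (i,j) = g (i,j)] (mod m)"
    using assms(3) pij unfolding mc_def full_def by auto
  moreover have "f (i,j) \<in> {0..<m}" "g (i,j) \<in> {0..<m}" using f g p pij by auto
  ultimately show "f p = g p" using pij by (auto simp: cong_def)
qed

lemma assoc_n: "A \<in> carrier_mat n n \<Longrightarrow> B \<in> carrier_mat n n \<Longrightarrow> C \<in> carrier_mat n n \<Longrightarrow>
  A * B * C = A * (B * C)" for A B C :: "int mat"
  by (rule assoc_mult_mat)

lemma cancel_l: "X \<in> carrier_mat n n \<Longrightarrow> X' \<in> carrier_mat n n \<Longrightarrow> Z \<in> carrier_mat n n \<Longrightarrow>
  X * X' = 1\<^sub>m n \<Longrightarrow> X * (X' * Z) = Z" for X X' Z :: "int mat"
  by (metis assoc_n left_mult_one_mat)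

lemma transpose3: "X \<in> carrier_mat n n \<Longrightarrow> Y \<in> carrier_mat n n \<Longrightarrow> Z \<in> carrier_mat n n \<Longrightarrow>
  transpose_mat (X * Y * Z) = transpose_mat Z * transpose_mat Y * transpose_mat X" for X Y Z :: "int mat"
  by (simp add: transpose_mult[of _ n n _ n])

lemma mz_left_cancel:
  assumes "B \<in> carrier_mat n n" "U \<in> carrier_mat n n" "U' \<in> carrier_mat n n" "U' * U = 1\<^sub>m n"
  shows "mz m n (U * B) \<longleftrightarrow> mz m n B"
  using mz_cancel[OF assms, of "1\<^sub>m n" "1\<^sub>m n" m] assms by simp

lemma count_full:
  assumes m: "m > 0"
    and c: "U \<in> carrier_mat n n" "U' \<in> carrier_mat n n" "V \<in> carrier_mat n n" "V' \<in> carrier_mat n n"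
      "M \<in> carrier_mat n n"
    and inv: "U' * U = 1\<^sub>m n" "V * V' = 1\<^sub>m n" "V' * V = 1\<^sub>m n"
  shows "card {f \<in> PiE (sq n) (\<lambda>_. {0..<m}). mz m n (U * M * V * full n f)}
       = card {g \<in> PiE (sq n) (\<lambda>_. {0..<m}). mz m n (M * full n g)}"
proof (rule bij_betw_same_card)
  define \<phi> where "\<phi> f = red m (sq n) (V * full n f)" for f
  define \<psi> where "\<psi> g = red m (sq n) (V' * full n g)" for g
  have e1: "U * M * V * full n f = U * (M * (V * full n f))" for f
    using c by (simp add: assoc_n)
  have mz1: "mz m n (U * M * V * full n f) \<longleftrightarrow> mz m n (M * (V * full n f))" for f
    unfolding e1 using c inv by (intro mz_left_cancel) auto
  have mcphi: "mc m n (full n (\<phi> f)) (V * full n f)" for f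
    unfolding \<phi>_def using c by (intro mc_full_red) auto
  have mcpsi: "mc m n (full n (\<psi> g)) (V' * full n g)" for g
    unfolding \<psi>_def using c by (intro mc_full_red) auto
  show "bij_betw \<phi> {f \<in> PiE (sq n) (\<lambda>_. {0..<m}). mz m n (U * M * V * full n f)}
       {g \<in> PiE (sq n) (\<lambda>_. {0..<m}). mz m n (M * full n g)}"
  proof (rule bij_betw_byWitness[where f'=\<psi>])
    show "\<phi> ` {f \<in> PiE (sq n) (\<lambda>_. {0..<m}). mz m n (U * M * V * full n f)}
       \<subseteq> {g \<in> PiE (sq n) (\<lambda>_. {0..<m}). mz m n (M * full n g)}"
    proof (rule image_subsetI)
      fix f assume "f \<in> {f \<in> PiE (sq n) (\<lambda>_. {0..<m}). mz m n (U * M * V * full n f)}"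
      then have f: "f \<in> PiE (sq n) (\<lambda>_. {0..<m})" "mz m n (U * M * V * full n f)" by auto
      have P: "\<phi> f \<in> PiE (sq n) (\<lambda>_. {0..<m})" unfolding \<phi>_def using m by (rule red_PiE)
      have "mc m n (M * full n (\<phi> f)) (M * (V * full n f))"
        using c mcphi by (intro mc_mult_left) auto
      then have "mz m n (M * full n (\<phi> f))" using f(2) mz1 mc_mz by blast
      then show "\<phi> f \<in> {g \<in> PiE (sq n) (\<lambda>_. {0..<m}). mz m n (M * full n g)}" using P by simp
    qed
    show "\<psi> ` {g \<in> PiE (sq n) (\<lambda>_. {0..<m}). mz m n (M * full n g)}
       \<subseteq> {f \<in> PiE (sq n) (\<lambda>_. {0..<m}). mz m n (U * M * V * full n f)}"
    proof (rule image_subsetI)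
      fix g assume "g \<in> {g \<in> PiE (sq n) (\<lambda>_. {0..<m}). mz m n (M * full n g)}"
      then have g: "g \<in> PiE (sq n) (\<lambda>_. {0..<m})" "mz m n (M * full n g)" by auto
      have P: "\<psi> g \<in> PiE (sq n) (\<lambda>_. {0..<m})" unfolding \<psi>_def using m by (rule red_PiE)
      have "mc m n (M * (V * full n (\<psi> g))) (M * (V * (V' * full n g)))"
        using c mcpsi by (intro mc_mult_left) auto
      also have "V * (V' * full n g) = full n g" using c inv by (intro cancel_l) auto
      finally have "mc m n (M * (V * full n (\<psi> g))) (M * full n g)" .
      then have "mz m n (U * M * V * full n (\<psi> g))" using g(2) mz1 mc_mz by blast
      then show "\<psi> g \<in> {f \<in> PiE (sq n) (\<lambda>_. {0..<m}). mz m n (U * M * V * full n f)}" using P by simp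
    qed
    show "\<forall>f\<in>{f \<in> PiE (sq n) (\<lambda>_. {0..<m}). mz m n (U * M * V * full n f)}. \<psi> (\<phi> f) = f"
    proof (rule ballI)
      fix f assume "f \<in> {f \<in> PiE (sq n) (\<lambda>_. {0..<m}). mz m n (U * M * V * full n f)}"
      then have f: "f \<in> PiE (sq n) (\<lambda>_. {0..<m})" by simp
      have "mc m n (full n (\<psi> (\<phi> f))) (V' * (V * full n f))"
        using mc_trans[OF mcpsi mc_mult_left[OF _ _ _ mcphi]] c by auto
      also have "V' * (V * full n f) = full n f" using c inv by (intro cancel_l) auto
      finally show "\<psi> (\<phi> f) = f"
        using full_inj f m by (metis \<psi>_def red_PiE)
    qed
    show "\<forall>g\<in>{g \<in> PiE (sq n) (\<lambda>_. {0..<m}). mz m n (M * full n g)}. \<phi> (\<psi> g) = g"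
    proof (rule ballI)
      fix g assume "g \<in> {g \<in> PiE (sq n) (\<lambda>_. {0..<m}). mz m n (M * full n g)}"
      then have g: "g \<in> PiE (sq n) (\<lambda>_. {0..<m})" by simp
      have "mc m n (full n (\<phi> (\<psi> g))) (V * (V' * full n g))"
        using mc_trans[OF mcphi mc_mult_left[OF _ _ _ mcpsi]] c by auto
      also have "V * (V' * full n g) = full n g" using c inv by (intro cancel_l) auto
      finally show "\<phi> (\<psi> g) = g"
        using full_inj g m by (metis \<phi>_def red_PiE)
    qed
  qed
qed


lemma transpose_inv:
  fixes X Y :: "int mat"
  assumes "X \<in> carrier_mat n n" "Y \<in> carrier_mat n n" "X * Y = 1\<^sub>m n"
  shows "transpose_mat Y * transpose_mat X = 1\<^sub>m n"
proof -
  have "transpose_mat (X * Y) = transpose_mat Y * transpose_mat X"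
    by (rule transpose_mult) (use assms in auto)
  then show ?thesis using assms(3) by simp
qed

lemma sandwich_cancel:
  fixes X X' Y Y' B :: "int mat"
  assumes c: "X \<in> carrier_mat n n" "X' \<in> carrier_mat n n" "Y \<in> carrier_mat n n" "Y' \<in> carrier_mat n n"
    "B \<in> carrier_mat n n" and i: "X * X' = 1\<^sub>m n" "Y' * Y = 1\<^sub>m n"
  shows "X * (X' * B * Y') * Y = B"
proof -
  have "X * (X' * B * Y') * Y = (X * X') * B * (Y' * Y)" using c by (simp add: assoc_n)
  then show ?thesis using i c by simp
qed

lemma count_sym:
  assumes m: "m > 0"
    and c: "P \<in> carrier_mat n n" "P' \<in> carrier_mat n n" "R \<in> carrier_mat n n" "R' \<in> carrier_mat n n"
      "D \<in> carrier_mat n n"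
    and inv: "P * P' = 1\<^sub>m n" "P' * P = 1\<^sub>m n" "R * R' = 1\<^sub>m n" "R' * R = 1\<^sub>m n"
  shows "card {f \<in> PiE (pairs n) (\<lambda>_. {0..<m}).
            mz m n (transpose_mat (P' * D * R') * symm n f * (P' * D * R'))}
       = card {g \<in> PiE (pairs n) (\<lambda>_. {0..<m}). mz m n (transpose_mat D * symm n g * D)}"
proof (rule bij_betw_same_card)
  define Pt where "Pt = transpose_mat P"
  define Pt' where "Pt' = transpose_mat P'"
  define Rt where "Rt = transpose_mat R"
  define Rt' where "Rt' = transpose_mat R'"
  define Dt where "Dt = transpose_mat D"
  have ct: "Pt \<in> carrier_mat n n" "Pt' \<in> carrier_mat n n" "Rt \<in> carrier_mat n n" "Rt' \<in> carrier_mat n n"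
    "Dt \<in> carrier_mat n n"
    using c by (auto simp: Pt_def Pt'_def Rt_def Rt'_def Dt_def)
  have it: "Pt' * Pt = 1\<^sub>m n" "Pt * Pt' = 1\<^sub>m n" "Rt * Rt' = 1\<^sub>m n"
    unfolding Pt_def Pt'_def Rt_def Rt'_def using c inv by (auto intro: transpose_inv)
  define W where "W Y = Pt' * Y * P'" for Y
  define Z where "Z Y = Pt * Y * P" for Y
  have AT: "transpose_mat (P' * D * R') = Rt' * Dt * Pt'"
    unfolding Rt'_def Dt_def Pt'_def by (rule transpose3) (use c in auto)
  have eA: "transpose_mat (P' * D * R') * Y * (P' * D * R') = Rt' * (Dt * W Y * D) * R'"
    if "Y \<in> carrier_mat n n" for Y
    unfolding AT W_def using c ct that by (simp add: assoc_n)
  have mz1: "mz m n (transpose_mat (P' * D * R') * Y * (P' * D * R')) \<longleftrightarrow> mz m n (Dt * W Y * D)"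
    if "Y \<in> carrier_mat n n" for Y
    unfolding eA[OF that] by (rule mz_cancel[OF _ ct(4) ct(3) it(3) c(4) c(3) inv(4)]) (use that c ct in \<open>unfold W_def; blast intro: mult_carrier_mat\<close>)
  have Wc: "W Y \<in> carrier_mat n n" "Z Y \<in> carrier_mat n n" if "Y \<in> carrier_mat n n" for Y
    using that c ct by (auto simp: W_def Z_def)
  have Wsym: "transpose_mat (W (symm n f)) = W (symm n f)" for f
    unfolding W_def Pt'_def using c by (simp add: transpose3)
  have Zsym: "transpose_mat (Z (symm n f)) = Z (symm n f)" for f
    unfolding Z_def Pt_def using c by (simp add: transpose3)
  have WZ: "W (Z Y) = Y" if "Y \<in> carrier_mat n n" for Y
    unfolding W_def Z_def by (rule sandwich_cancel[OF ct(2) ct(1) c(2) c(1) that it(1) inv(1)])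
  have ZW: "Z (W Y) = Y" if "Y \<in> carrier_mat n n" for Y
    unfolding W_def Z_def by (rule sandwich_cancel[OF ct(1) ct(2) c(1) c(2) that it(2) inv(2)])
  define \<phi> where "\<phi> f = red m (pairs n) (W (symm n f))" for f
  define \<psi> where "\<psi> g = red m (pairs n) (Z (symm n g))" for g
  have mcphi: "mc m n (symm n (\<phi> f)) (W (symm n f))" for f
    unfolding \<phi>_def using Wc Wsym by (intro mc_symm_red) auto
  have mcpsi: "mc m n (symm n (\<psi> g)) (Z (symm n g))" for g
    unfolding \<psi>_def using Wc Zsym by (intro mc_symm_red) auto
  have mcW: "mc m n (W A) (W B)" "mc m n (Z A) (Z B)"
    if "A \<in> carrier_mat n n" "B \<in> carrier_mat n n" "mc m n A B" for A B
    unfolding W_def Z_def using that c ct by (auto intro: mc_mult3 simp del: assoc_mult_mat)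
  have mcD: "mc m n (Dt * A * D) (Dt * B * D)"
    if "A \<in> carrier_mat n n" "B \<in> carrier_mat n n" "mc m n A B" for A B
    using that c ct by (auto intro: mc_mult3 simp del: assoc_mult_mat)
  let ?S1 = "{f \<in> PiE (pairs n) (\<lambda>_. {0..<m}).
            mz m n (transpose_mat (P' * D * R') * symm n f * (P' * D * R'))}"
  let ?S2 = "{g \<in> PiE (pairs n) (\<lambda>_. {0..<m}). mz m n (transpose_mat D * symm n g * D)}"
  show "bij_betw \<phi> ?S1 ?S2"
  proof (rule bij_betw_byWitness[where f'=\<psi>])
    show "\<phi> ` ?S1 \<subseteq> ?S2"
    proof (rule image_subsetI)
      fix f assume "f \<in> ?S1"
      then have f: "f \<in> PiE (pairs n) (\<lambda>_. {0..<m})" "mz m n (Dt * W (symm n f) * D)"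
        using mz1 by auto
      have P: "\<phi> f \<in> PiE (pairs n) (\<lambda>_. {0..<m})" unfolding \<phi>_def using m by (rule red_PiE)
      have "mc m n (Dt * symm n (\<phi> f) * D) (Dt * W (symm n f) * D)"
        using mcphi Wc by (intro mcD) auto
      then have "mz m n (Dt * symm n (\<phi> f) * D)" using f(2) mc_mz by blast
      then show "\<phi> f \<in> ?S2" using P by (simp add: Dt_def)
    qed
    show "\<psi> ` ?S2 \<subseteq> ?S1"
    proof (rule image_subsetI)
      fix g assume "g \<in> ?S2"
      then have g: "g \<in> PiE (pairs n) (\<lambda>_. {0..<m})" "mz m n (Dt * symm n g * D)"
        by (auto simp: Dt_def)
      have P: "\<psi> g \<in> PiE (pairs n) (\<lambda>_. {0..<m})" unfolding \<psi>_def using m by (rule red_PiE)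
      have "mc m n (W (symm n (\<psi> g))) (W (Z (symm n g)))"
        using mcpsi Wc by (intro mcW) auto
      then have "mc m n (W (symm n (\<psi> g))) (symm n g)" using WZ by simp
      then have "mc m n (Dt * W (symm n (\<psi> g)) * D) (Dt * symm n g * D)"
        using Wc by (intro mcD) auto
      then have "mz m n (Dt * W (symm n (\<psi> g)) * D)" using g(2) mc_mz by blast
      then show "\<psi> g \<in> ?S1" using P mz1 by simp
    qed
    show "\<forall>f\<in>?S1. \<psi> (\<phi> f) = f"
    proof (rule ballI)
      fix f assume "f \<in> ?S1"
      then have f: "f \<in> PiE (pairs n) (\<lambda>_. {0..<m})" by simp
      have "mc m n (Z (symm n (\<phi> f))) (Z (W (symm n f)))"
        using mcphi Wc by (intro mcW) auto
      then have "mc m n (symm n (\<psi> (\<phi> f))) (symm n f)"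
        using mc_trans[OF mcpsi] ZW by simp
      then show "\<psi> (\<phi> f) = f"
        using symm_inj f m by (metis \<psi>_def red_PiE)
    qed
    show "\<forall>g\<in>?S2. \<phi> (\<psi> g) = g"
    proof (rule ballI)
      fix g assume "g \<in> ?S2"
      then have g: "g \<in> PiE (pairs n) (\<lambda>_. {0..<m})" by simp
      have "mc m n (W (symm n (\<psi> g))) (W (Z (symm n g)))"
        using mcpsi Wc by (intro mcW) auto
      then have "mc m n (symm n (\<phi> (\<psi> g))) (symm n g)"
        using mc_trans[OF mcphi] WZ by simp
      then show "\<phi> (\<psi> g) = g"
        using symm_inj g m by (metis \<phi>_def red_PiE)
    qed
  qed
qed

definition diagm :: "nat \<Rightarrow> (nat \<Rightarrow> int) \<Rightarrow> int mat" where
  "diagm n c = Matrix.mat n n (\<lambda>(i,j). if i = j then c i else 0)"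

lemma diagm_carrier[simp]: "diagm n c \<in> carrier_mat n n" by (simp add: diagm_def)

lemma diagm_transpose[simp]: "transpose_mat (diagm n c) = diagm n c"
  by (rule eq_matI) (auto simp: diagm_def)

lemma diag_left:
  assumes "B \<in> carrier_mat n n" "i < n" "j < n"
  shows "(diagm n c * B) $$ (i,j) = c i * B $$ (i,j)"
proof -
  have "(diagm n c * B) $$ (i,j) = (\<Sum>k\<in>{0..<n}. diagm n c $$ (i,k) * B $$ (k,j))"
    using assms by (intro mult_entry) auto
  also have "\<dots> = (\<Sum>k\<in>{0..<n}. if k = i then c i * B $$ (i,j) else 0)"
    using assms by (intro sum.cong) (auto simp: diagm_def)
  also have "\<dots> = c i * B $$ (i,j)" using assms by simp
  finally show ?thesis .
qed

lemma diag_right: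
  assumes "B \<in> carrier_mat n n" "i < n" "j < n"
  shows "(B * diagm n c) $$ (i,j) = B $$ (i,j) * c j"
proof -
  have "(B * diagm n c) $$ (i,j) = (\<Sum>k\<in>{0..<n}. B $$ (i,k) * diagm n c $$ (k,j))"
    using assms by (intro mult_entry) auto
  also have "\<dots> = (\<Sum>k\<in>{0..<n}. if k = j then B $$ (i,j) * c j else 0)"
    using assms by (intro sum.cong) (auto simp: diagm_def)
  also have "\<dots> = B $$ (i,j) * c j" using assms by simp
  finally show ?thesis .
qed

lemma finite_pairs[simp]: "finite (pairs n)"
proof -
  have "pairs n \<subseteq> {0..<n} \<times> {0..<n}" by (auto simp: pairs_def)
  then show ?thesis by (rule finite_subset) auto
qed

lemma finite_sq[simp]: "finite (sq n)" by (simp add: sq_def)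

lemma count_diag_full:
  assumes m: "m > 0"
  shows "card {g \<in> PiE (sq n) (\<lambda>_. {0..<m}). mz m n (diagm n c * full n g)}
       = (\<Prod>i<n. nat (gcd (c i) m)) ^ n"
proof -
  have "{g \<in> PiE (sq n) (\<lambda>_. {0..<m}). mz m n (diagm n c * full n g)}
      = PiE (sq n) (\<lambda>p. {x\<in>{0..<m}. m dvd c (fst p) * x})"
  proof (intro Set.set_eqI iffI)
    fix g assume "g \<in> {g \<in> PiE (sq n) (\<lambda>_. {0..<m}). mz m n (diagm n c * full n g)}"
    then have g: "g \<in> PiE (sq n) (\<lambda>_. {0..<m})" "mz m n (diagm n c * full n g)" by auto
    have "m dvd c (fst p) * g p" if p: "p \<in> sq n" for p
    proof -
      obtain i j where ij: "p = (i,j)" "i < n" "j < n" using p by (auto simp: sq_def)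
      have "m dvd (diagm n c * full n g) $$ (i,j)" using g(2) ij unfolding mz_def by auto
      then show ?thesis using ij by (simp add: diag_left full_def)
    qed
    then show "g \<in> PiE (sq n) (\<lambda>p. {x\<in>{0..<m}. m dvd c (fst p) * x})" using g(1)
      by (auto simp: PiE_iff)
  next
    fix g assume g: "g \<in> PiE (sq n) (\<lambda>p. {x\<in>{0..<m}. m dvd c (fst p) * x})"
    have "mz m n (diagm n c * full n g)"
      unfolding mz_def
    proof (intro allI impI)
      fix i j assume ij: "i < n" "j < n"
      then have "(i,j) \<in> sq n" by (simp add: sq_def)
      then have "m dvd c i * g (i,j)" using g by (auto simp: PiE_iff)
      then show "m dvd (diagm n c * full n g) $$ (i,j)" using ij by (simp add: diag_left full_def)
    qed
    then show "g \<in> {g \<in> PiE (sq n) (\<lambda>_. {0..<m}). mz m n (diagm n c * full n g)}"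
      using g by (auto simp: PiE_iff)
  qed
  then have "card {g \<in> PiE (sq n) (\<lambda>_. {0..<m}). mz m n (diagm n c * full n g)}
      = (\<Prod>p\<in>sq n. card {x\<in>{0..<m}. m dvd c (fst p) * x})"
    by (simp add: card_PiE)
  also have "\<dots> = (\<Prod>p\<in>{0..<n} \<times> {0..<n}. nat (gcd (c (fst p)) m))"
    unfolding sq_def by (rule prod.cong[OF refl card_dvd_mult[OF m]])
  also have "\<dots> = (\<Prod>i\<in>{0..<n}. \<Prod>j\<in>{0..<n}. nat (gcd (c i) m))"
    by (subst prod.cartesian_product) (simp add: split_def)
  also have "\<dots> = (\<Prod>i\<in>{0..<n}. nat (gcd (c i) m) ^ n)" by simp
  also have "\<dots> = (\<Prod>i<n. nat (gcd (c i) m)) ^ n"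
    by (simp add: prod_power_distrib atLeast0LessThan)
  finally show ?thesis .
qed

lemma count_diag_sym:
  assumes m: "m > 0"
  shows "card {g \<in> PiE (pairs n) (\<lambda>_. {0..<m}).
             mz m n (transpose_mat (diagm n c) * symm n g * diagm n c)}
       = (\<Prod>p\<in>pairs n. nat (gcd (c (fst p) * c (snd p)) m))"
proof -
  have entry: "(transpose_mat (diagm n c) * symm n g * diagm n c) $$ (i,j)
      = c i * c j * g (min i j, max i j)" if "i < n" "j < n" for g i j
  proof -
    have "(transpose_mat (diagm n c) * symm n g * diagm n c) $$ (i,j)
        = (diagm n c * symm n g) $$ (i,j) * c j"
      using diag_right[OF mult_carrier_mat[OF diagm_carrier symm_carrier] that] by simp
    also have "\<dots> = c i * symm n g $$ (i,j) * c j"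
      using that by (simp add: diag_left)
    finally show ?thesis using that by (simp add: symm_def)
  qed
  have "{g \<in> PiE (pairs n) (\<lambda>_. {0..<m}). mz m n (transpose_mat (diagm n c) * symm n g * diagm n c)}
      = PiE (pairs n) (\<lambda>p. {x\<in>{0..<m}. m dvd (c (fst p) * c (snd p)) * x})"
  proof (intro Set.set_eqI iffI)
    fix g assume "g \<in> {g \<in> PiE (pairs n) (\<lambda>_. {0..<m}).
        mz m n (transpose_mat (diagm n c) * symm n g * diagm n c)}"
    then have g: "g \<in> PiE (pairs n) (\<lambda>_. {0..<m})"
      "mz m n (transpose_mat (diagm n c) * symm n g * diagm n c)" by auto
    have "m dvd (c (fst p) * c (snd p)) * g p" if p: "p \<in> pairs n" for p
    proof -
      obtain i j where ij: "p = (i,j)" "i \<le> j" "j < n" using p by (auto simp: pairs_def)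
      have "m dvd (transpose_mat (diagm n c) * symm n g * diagm n c) $$ (i,j)"
        using g(2) ij unfolding mz_def by auto
      then show ?thesis using ij entry[of i j g] by (simp add: min_def max_def)
    qed
    then show "g \<in> PiE (pairs n) (\<lambda>p. {x\<in>{0..<m}. m dvd (c (fst p) * c (snd p)) * x})"
      using g(1) by (auto simp: PiE_iff)
  next
    fix g assume g: "g \<in> PiE (pairs n) (\<lambda>p. {x\<in>{0..<m}. m dvd (c (fst p) * c (snd p)) * x})"
    have "mz m n (transpose_mat (diagm n c) * symm n g * diagm n c)"
      unfolding mz_def
    proof (intro allI impI)
      fix i j assume ij: "i < n" "j < n"
      then have "(min i j, max i j) \<in> pairs n" by (simp add: pairs_def)
      then have "m dvd (c (min i j) * c (max i j)) * g (min i j, max i j)" using g by (auto simp: PiE_iff)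
      moreover have "c (min i j) * c (max i j) = c i * c j" by (simp add: min_def max_def)
      ultimately show "m dvd (transpose_mat (diagm n c) * symm n g * diagm n c) $$ (i,j)"
        using ij entry[of i j g] by simp
    qed
    then show "g \<in> {g \<in> PiE (pairs n) (\<lambda>_. {0..<m}).
        mz m n (transpose_mat (diagm n c) * symm n g * diagm n c)}"
      using g by (auto simp: PiE_iff)
  qed
  then have "card {g \<in> PiE (pairs n) (\<lambda>_. {0..<m}).
             mz m n (transpose_mat (diagm n c) * symm n g * diagm n c)}
      = (\<Prod>p\<in>pairs n. card {x\<in>{0..<m}. m dvd (c (fst p) * c (snd p)) * x})"
    by (simp add: card_PiE)
  also have "\<dots> = (\<Prod>p\<in>pairs n. nat (gcd (c (fst p) * c (snd p)) m))"
    by (rule prod.cong[OF refl card_dvd_mult[OF m]])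
  finally show ?thesis .
qed

lemma unimodularE:
  assumes "unimodular n P"
  obtains P' where "P \<in> carrier_mat n n" "P' \<in> carrier_mat n n" "P * P' = 1\<^sub>m n" "P' * P = 1\<^sub>m n"
  using assms unfolding unimodular_def by blast

lemma four_cancel:
  fixes A B C E :: "int mat"
  assumes c: "A \<in> carrier_mat n n" "B \<in> carrier_mat n n" "C \<in> carrier_mat n n" "E \<in> carrier_mat n n"
    and i: "B * C = 1\<^sub>m n" "A * E = 1\<^sub>m n"
  shows "A * B * (C * E) = 1\<^sub>m n"
proof -
  have "A * B * (C * E) = A * ((B * C) * E)" using c by (simp add: assoc_n)
  then show ?thesis using i c by simp
qed

lemma snf_pair:
  fixes A :: "int mat" and d :: "nat \<Rightarrow> int" and L :: int
  assumes A: "A \<in> carrier_mat n n" and L: "L > 0"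
    and AA: "transpose_mat A * A = L \<cdot>\<^sub>m 1\<^sub>m n"
    and snf: "smith_diag n A d"
  shows "\<forall>i\<in>{1..n}. d i > 0 \<and> d i * d (Suc n - i) = L"
proof (cases "n = 0")
  case True then show ?thesis by simp
next
  case False
  then have n: "n > 0" by simp
  from snf have dnn: "\<forall>i\<in>{1..n}. d i \<ge> 0" and ch: "\<forall>i. 1 \<le> i \<and> i < n \<longrightarrow> d i dvd d (Suc i)"
    and "\<exists>P R. unimodular n P \<and> unimodular n R \<and>
        P * A * R = Matrix.mat n n (\<lambda>(i,j). if i = j then d (Suc i) else 0)"
    unfolding smith_diag_def by auto
  then obtain P R where uP: "unimodular n P" and uR: "unimodular n R"
    and PAR: "P * A * R = diagm n (\<lambda>i. d (Suc i))" by (auto simp: diagm_def)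
  obtain P' where P: "P \<in> carrier_mat n n" "P' \<in> carrier_mat n n" "P * P' = 1\<^sub>m n" "P' * P = 1\<^sub>m n"
    using uP by (rule unimodularE)
  obtain R' where R: "R \<in> carrier_mat n n" "R' \<in> carrier_mat n n" "R * R' = 1\<^sub>m n" "R' * R = 1\<^sub>m n"
    using uR by (rule unimodularE)
  define D where "D = diagm n (\<lambda>i. d (Suc i))"
  have Dc: "D \<in> carrier_mat n n" by (simp add: D_def)
  have At: "transpose_mat A \<in> carrier_mat n n" using A by simp
  define E where "E = R' * transpose_mat A * P'"
  have Ec: "E \<in> carrier_mat n n" using A P R by (simp add: E_def)
  have ED: "E * D = L \<cdot>\<^sub>m 1\<^sub>m n"
  proof -
    have "E * D = R' * (transpose_mat A * (P' * (P * (A * R))))"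
      unfolding E_def D_def PAR[symmetric] using A P R At by (simp add: assoc_n)
    also have "P' * (P * (A * R)) = A * R" using A P R by (intro cancel_l) auto
    also have "transpose_mat A * (A * R) = (transpose_mat A * A) * R" using A R At by (simp add: assoc_n)
    also have "\<dots> = L \<cdot>\<^sub>m R" unfolding AA using R by (simp add: mult_smult_assoc_mat[of _ n n])
    also have "R' * (L \<cdot>\<^sub>m R) = L \<cdot>\<^sub>m (R' * R)" using R by (simp add: mult_smult_distrib[of _ n n])
    finally show ?thesis using R by simp
  qed
  have EDe: "E $$ (i,j) * d (Suc j) = (if i = j then L else 0)" if "i < n" "j < n" for i j
  proof -
    have "E $$ (i,j) * d (Suc j) = (E * D) $$ (i,j)"
      unfolding D_def using diag_right[OF Ec that] by simp
    also have "\<dots> = (if i = j then L else 0)" unfolding ED using that by simp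
    finally show ?thesis .
  qed
  have dpos: "d i > 0" if "i \<in> {1..n}" for i
  proof -
    have i: "i - 1 < n" "Suc (i - 1) = i" using that by auto
    have "E $$ (i - 1, i - 1) * d i = L" using EDe[of "i-1" "i-1"] i by simp
    then have "d i \<noteq> 0" using L by auto
    then show ?thesis using dnn that by force
  qed
  define e where "e i = E $$ (i,i)" for i
  have Ediag: "E = diagm n e"
  proof (rule eq_matI)
    fix i j assume ij: "i < dim_row (diagm n e)" "j < dim_col (diagm n e)"
    then have ij': "i < n" "j < n" by (auto simp: diagm_def)
    have "d (Suc j) > 0" using dpos[of "Suc j"] ij' by auto
    then show "E $$ (i,j) = diagm n e $$ (i,j)"
      using EDe[OF ij'] ij' by (auto simp: diagm_def e_def)
  qed (use Ec in \<open>auto simp: diagm_def\<close>)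
  have ed: "e i * d (Suc i) = L" if "i < n" for i using EDe[OF that that] by (simp add: e_def)
  have Aeq: "A = P' * D * R'"
  proof -
    have "P' * D * R' = P' * (P * (A * (R * R')))" unfolding D_def PAR[symmetric] using A P R by (simp add: assoc_n)
    also have "\<dots> = A" using A P R by (simp add: cancel_l)
    finally show ?thesis by simp
  qed
  have ATeq: "transpose_mat A = transpose_mat R' * D * transpose_mat P'"
    unfolding Aeq by (subst transpose3[of _ n]) (use P R Dc in \<open>auto simp: D_def\<close>)
  define U where "U = R' * transpose_mat R'"
  define U' where "U' = transpose_mat R * R"
  define V where "V = transpose_mat P' * P'"
  define V' where "V' = P * transpose_mat P"
  have Uc: "U \<in> carrier_mat n n" "U' \<in> carrier_mat n n" "V \<in> carrier_mat n n" "V' \<in> carrier_mat n n"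
    using P R by (auto simp: U_def U'_def V_def V'_def)
  have tR: "transpose_mat R * transpose_mat R' = 1\<^sub>m n" using R by (intro transpose_inv) auto
  have tP: "transpose_mat P' * transpose_mat P = 1\<^sub>m n" using P by (intro transpose_inv) auto
  have tP2: "transpose_mat P * transpose_mat P' = 1\<^sub>m n" using P by (intro transpose_inv) auto
  have UU: "U' * U = 1\<^sub>m n"
    unfolding U_def U'_def by (rule four_cancel[of _ n]) (use R tR in auto)
  have VV: "V * V' = 1\<^sub>m n"
    unfolding V_def V'_def by (rule four_cancel[of _ n]) (use P tP in auto)
  have VV2: "V' * V = 1\<^sub>m n"
    unfolding V_def V'_def by (rule four_cancel[of _ n]) (use P tP2 in auto)
  have EUDV: "E = U * D * V"
  proof -
    have "E = R' * (transpose_mat R' * D * transpose_mat P') * P'" unfolding E_def ATeq ..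
    also have "\<dots> = U * D * V" unfolding U_def V_def using P R Dc by (simp add: assoc_n)
    finally show ?thesis .
  qed
  have prodeq: "(\<Prod>i<n. nat (gcd (e i) m)) = (\<Prod>i<n. nat (gcd (d (Suc i)) m))" if m: "m > 0" for m
  proof -
    have "(\<Prod>i<n. nat (gcd (e i) m)) ^ n = card {g \<in> PiE (sq n) (\<lambda>_. {0..<m}). mz m n (E * full n g)}"
      unfolding Ediag by (rule count_diag_full[OF m, symmetric])
    also have "\<dots> = card {g \<in> PiE (sq n) (\<lambda>_. {0..<m}). mz m n (D * full n g)}"
      unfolding EUDV by (rule count_full[OF m Uc(1,2,3,4) Dc UU VV VV2])
    also have "\<dots> = (\<Prod>i<n. nat (gcd (d (Suc i)) m)) ^ n"
      unfolding D_def by (rule count_diag_full[OF m])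
    finally show ?thesis using n by (simp add: power_eq_iff_eq_base)
  qed
  define b where "b i = L div d (Suc n - i)" for i
  have dL: "d i * (L div d i) = L" if "i \<in> {1..n}" for i
  proof -
    have i: "i - 1 < n" "Suc (i - 1) = i" using that by auto
    have "e (i - 1) * d i = L" using ed[of "i - 1"] i by simp
    then have "d i dvd L" using dvd_triv_right[of "d i" "e (i - 1)"] by simp
    then show ?thesis by simp
  qed
  have bpos: "b i > 0" if "i \<in> {1..n}" for i
  proof -
    have j: "Suc n - i \<in> {1..n}" using that by auto
    have "d (Suc n - i) * b i = L" using dL[OF j] by (simp add: b_def)
    then show ?thesis using zero_less_mult_pos[of "d (Suc n - i)" "b i"] dpos[OF j] L by simp
  qed
  have chb: "\<forall>i. 1 \<le> i \<and> i < n \<longrightarrow> b i dvd b (Suc i)"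
  proof (intro allI impI)
    fix i assume i: "1 \<le> i \<and> i < n"
    have j1: "Suc n - i \<in> {1..n}" and j2: "n - i \<in> {1..n}" using i by auto
    have "d (n - i) dvd d (Suc (n - i))" using ch j2 i by auto
    then obtain k where k: "d (Suc n - i) = d (n - i) * k" using i by (auto simp: Suc_diff_le elim: dvdE)
    have "d (n - i) * b (Suc i) = L" using dL[OF j2] by (simp add: b_def)
    also have "L = d (n - i) * (k * b i)" using dL[OF j1] k by (simp add: b_def mult.assoc)
    finally have "b (Suc i) = k * b i" using dpos[OF j2] by simp
    then show "b i dvd b (Suc i)" by simp
  qed
  have eqprod: "\<forall>m>0. (\<Prod>i\<in>{1..n}. gcd (d i) m) = (\<Prod>i\<in>{1..n}. gcd (b i) m)"
  proof (intro allI impI)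
    fix m :: int assume m: "m > 0"
    have "(\<Prod>i\<in>{1..n}. gcd (d i) m) = (\<Prod>i<n. gcd (d (Suc i)) m)"
      by (rule prod.reindex_bij_witness[where i="\<lambda>i. Suc i" and j="\<lambda>i. i - 1"]) auto
    also have "\<dots> = int (\<Prod>i<n. nat (gcd (d (Suc i)) m))" by simp
    also have "\<dots> = int (\<Prod>i<n. nat (gcd (e i) m))" using prodeq[OF m] by simp
    also have "\<dots> = (\<Prod>i<n. gcd (e i) m)" by simp
    also have "\<dots> = (\<Prod>i<n. gcd (L div d (Suc i)) m)"
    proof (rule prod.cong[OF refl])
      fix i assume "i \<in> {..<n}"
      then have "e i = L div d (Suc i)" using ed[of i] dpos[of "Suc i"] by auto
      then show "gcd (e i) m = gcd (L div d (Suc i)) m" by simp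
    qed
    also have "\<dots> = (\<Prod>i\<in>{1..n}. gcd (b i) m)"
      unfolding b_def
      by (rule prod.reindex_bij_witness[where i="\<lambda>i. n - i" and j="\<lambda>i. n - i"]) auto
    finally show "(\<Prod>i\<in>{1..n}. gcd (d i) m) = (\<Prod>i\<in>{1..n}. gcd (b i) m)" .
  qed
  have dk: "d k = b k" if "k \<in> {1..n}" for k
    by (rule chain_unique[OF _ _ ch chb eqprod that]) (use dpos bpos in auto)
  show ?thesis
  proof (intro ballI conjI)
    fix i assume i: "i \<in> {1..n}"
    show "d i > 0" by (rule dpos[OF i])
    have j: "Suc n - i \<in> {1..n}" using i by auto
    have "d i = L div d (Suc n - i)" using dk[OF i] by (simp add: b_def)
    then show "d i * d (Suc n - i) = L" using dL[OF j] by (simp add: mult.commute)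
  qed
qed

lemma rat_denom_exists: "\<exists>k::nat. k \<ge> 1 \<and> of_nat k * (q::rat) \<in> \<int>"
proof -
  obtain a b where qb: "quotient_of q = (a, b)" by (cases "quotient_of q")
  have b: "b > 0" using quotient_of_denom_pos[OF qb] .
  have q: "q = of_int a / of_int b" using quotient_of_div[OF qb] .
  have "of_nat (nat b) * q = of_int a" using b q by simp
  then show ?thesis using b by (intro exI[of _ "nat b"]) auto
qed

lemma level_exists:
  assumes "Q \<in> carrier_mat n n"
  shows "\<exists>l. l \<ge> 1 \<and> integral_mat n (of_nat l \<cdot>\<^sub>m Q)"
proof -
  define K where "K p = (SOME k::nat. k \<ge> 1 \<and> of_nat k * Q $$ p \<in> \<int>)" for p
  have K: "K p \<ge> 1 \<and> of_nat (K p) * Q $$ p \<in> \<int>" for p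
    unfolding K_def by (rule someI_ex) (rule rat_denom_exists)
  define l where "l = (\<Prod>p\<in>sq n. K p)"
  have l1: "l \<ge> 1" unfolding l_def using K
    by (metis (no_types, lifting) One_nat_def Suc_le_eq prod_pos)
  have "integral_mat n (of_nat l \<cdot>\<^sub>m Q)"
    unfolding integral_mat_def
  proof (intro allI impI)
    fix i j assume ij: "i < n" "j < n"
    then have p: "(i,j) \<in> sq n" by (simp add: sq_def)
    have "l = K (i,j) * (\<Prod>p\<in>sq n - {(i,j)}. K p)"
      unfolding l_def using p by (simp add: prod.remove)
    then have "of_nat l * Q $$ (i,j) = of_nat (\<Prod>p\<in>sq n - {(i,j)}. K p) * (of_nat (K (i,j)) * Q $$ (i,j))"
      by simp
    also have "\<dots> \<in> \<int>" using Ints_mult[OF Ints_of_nat conjunct2[OF K[of "(i,j)"]]] .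
    finally show "(of_nat l \<cdot>\<^sub>m Q) $$ (i,j) \<in> \<int>" using ij assms by simp
  qed
  then show ?thesis using l1 by blast
qed

lemma level_pos:
  assumes "Q \<in> carrier_mat n n"
  shows "level n Q \<ge> 1"
  unfolding level_def using LeastI_ex[OF level_exists[OF assms]] by blast

lemma transpose_smult_int: "transpose_mat (a \<cdot>\<^sub>m B) = a \<cdot>\<^sub>m transpose_mat B"
  by (rule eq_matI) auto

lemma smult_smult_m: "a \<cdot>\<^sub>m (b \<cdot>\<^sub>m B) = (a * b :: 'a :: semigroup_mult) \<cdot>\<^sub>m B"
  by (rule eq_matI) (auto simp: mult.assoc)

lemma sandwich_of_int:
  fixes A Y :: "int mat" and Q :: "rat mat" and l :: nat
  assumes A: "A \<in> carrier_mat n n" and Q: "Q \<in> carrier_mat n n" and Y: "Y \<in> carrier_mat n n"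
    and AQ: "map_mat of_int A = of_nat l \<cdot>\<^sub>m Q"
  shows "map_mat of_int (transpose_mat A * Y * A) = (of_nat l)^2 \<cdot>\<^sub>m (transpose_mat Q * map_mat of_int Y * Q)"
proof -
  have "map_mat (of_int :: int \<Rightarrow> rat) (transpose_mat A * Y * A)
      = map_mat of_int (transpose_mat A) * map_mat of_int Y * map_mat of_int A"
    using A Y by (simp add: of_int_hom.mat_hom_mult[of _ n n _ n])
  also have "map_mat (of_int :: int \<Rightarrow> rat) (transpose_mat A) = transpose_mat (of_nat l \<cdot>\<^sub>m Q)"
    by (simp add: map_mat_transpose[symmetric] AQ)
  also have "\<dots> = of_nat l \<cdot>\<^sub>m transpose_mat Q" by (rule eq_matI) auto
  also have "of_nat l \<cdot>\<^sub>m transpose_mat Q * map_mat of_int Y * map_mat of_int A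
      = (of_nat l)^2 \<cdot>\<^sub>m (transpose_mat Q * map_mat of_int Y * Q)"
    unfolding AQ using Q Y
    by (simp add: mult_smult_assoc_mat[of _ n n] mult_smult_distrib[of _ n n] power2_eq_square
        smult_smult_m)
  finally show ?thesis .
qed

lemma int_entry:
  fixes z :: int and w :: rat and L :: int
  assumes L: "L > 0" and e: "of_int z = of_int L * w"
  shows "w \<in> \<int> \<longleftrightarrow> L dvd z"
proof
  assume "w \<in> \<int>"
  then obtain k where k: "w = of_int k" by (auto elim: Ints_cases)
  then have "(of_int z :: rat) = of_int (L * k)" using e by simp
  then have "z = L * k" by (simp only: of_int_eq_iff)
  then show "L dvd z" by simp
next
  assume "L dvd z"
  then obtain k where k: "z = L * k" by (auto elim: dvdE)
  then have "of_int L * w = of_int L * (of_int k :: rat)" using e by auto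
  then have "w = of_int k" using L by simp
  then show "w \<in> \<int>" by simp
qed

lemma gcd_pair:
  fixes d :: "nat \<Rightarrow> int" and L :: int
  assumes dprop: "\<forall>i\<in>{1..n}. d i > 0 \<and> d i * d (Suc n - i) = L"
    and ch: "\<forall>i. 1 \<le> i \<and> i < n \<longrightarrow> d i dvd d (Suc i)"
    and ab: "1 \<le> a" "a \<le> b" "b \<le> n"
  shows "gcd (d a * d b) L = (if a + b \<le> n then d a * d b else L)"
proof (cases "a + b \<le> n")
  case True
  have "d b dvd d (Suc n - a)" using ab True by (intro chain_dvd[OF ch]) auto
  then have "d a * d b dvd d a * d (Suc n - a)" by simp
  also have "\<dots> = L" using dprop ab by auto
  finally have "d a * d b dvd L" .
  moreover have "d a * d b > 0" using dprop ab by auto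
  ultimately show ?thesis using True by (simp add: gcd_proj1_iff)
next
  case False
  have "d (Suc n - a) dvd d b" using ab False by (intro chain_dvd[OF ch]) auto
  then have "d a * d (Suc n - a) dvd d a * d b" by simp
  moreover have "d a * d (Suc n - a) = L" using dprop ab by auto
  moreover have "L > 0"
  proof -
    have j: "Suc n - a \<in> {1..n}" using ab by auto
    have "d a > 0" "d (Suc n - a) > 0" using dprop ab j by auto
    then have "d a * d (Suc n - a) > 0" by simp
    then show ?thesis using dprop ab by auto
  qed
  ultimately show ?thesis using False by (simp add: gcd_proj2_iff)
qed

theorem corollary1p5:
  fixes n :: nat and Q :: "rat mat" and A :: "int mat" and d :: "nat \<Rightarrow> int"
    and M :: "'a measure" and X :: "'a \<Rightarrow> int mat"
  assumes "n \<ge> 1"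
    and "orthogonal_rat_mat n Q"
    and "A \<in> carrier_mat n n"
    and "map_mat of_int A = of_nat (level n Q) \<cdot>\<^sub>m Q"
    and "smith_diag n A d"
    and "prob_space M"
    and "\<forall>\<omega>\<in>space M. X \<omega> \<in> carrier_mat n n \<and> transpose_mat (X \<omega>) = X \<omega>"
    and "\<forall>i<n. \<forall>j<n. (\<lambda>\<omega>. X \<omega> $$ (i,j)) \<in> measurable M (count_space UNIV)"
    and "prob_space.indep_vars M (\<lambda>_. count_space UNIV)
           (\<lambda>(i,j) \<omega>. X \<omega> $$ (i,j) mod (int (level n Q))^2) {(i,j). i \<le> j \<and> j < n}"
    and "\<forall>i j. i \<le> j \<and> j < n \<longrightarrow>
           distr M (count_space UNIV) (\<lambda>\<omega>. X \<omega> $$ (i,j) mod (int (level n Q))^2)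
             = uniform_measure (count_space UNIV) {0..<(int (level n Q))^2}"
  shows "measure M {\<omega> \<in> space M.
           integral_mat n (transpose_mat Q * map_mat of_int (X \<omega>) * Q)}
         = (\<Prod>i\<in>{1..n div 2}. \<Prod>j\<in>{i..n-i}. real_of_int (d i * d j) / real (level n Q)^2)"
proof -
  interpret M: prob_space M by (rule assms(6))
  define l where "l = level n Q"
  define L where "L = (int l)^2"
  have Qc: "Q \<in> carrier_mat n n" and QQ: "transpose_mat Q * Q = 1\<^sub>m n"
    using assms(2) unfolding orthogonal_rat_mat_def by auto
  have A: "A \<in> carrier_mat n n" by (rule assms(3))
  have l1: "l \<ge> 1" unfolding l_def by (rule level_pos[OF Qc])
  have Lpos: "L > 0" unfolding L_def using l1 by simp
  have AQ: "map_mat of_int A = of_nat l \<cdot>\<^sub>m Q" unfolding l_def by (rule assms(4))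
  have Lrat: "(of_nat l :: rat)^2 = of_int L" unfolding L_def by simp
  have sand: "map_mat (of_int :: int \<Rightarrow> rat) (transpose_mat A * Y * A)
      = of_int L \<cdot>\<^sub>m (transpose_mat Q * map_mat of_int Y * Q)" if "Y \<in> carrier_mat n n" for Y
    using sandwich_of_int[OF A Qc that AQ] Lrat by simp
  have AA: "transpose_mat A * A = L \<cdot>\<^sub>m 1\<^sub>m n"
  proof (rule eq_matI)
    fix i j assume ij: "i < dim_row (L \<cdot>\<^sub>m 1\<^sub>m n)" "j < dim_col (L \<cdot>\<^sub>m 1\<^sub>m n)"
    then have ij': "i < n" "j < n" by auto
    have "map_mat (of_int :: int \<Rightarrow> rat) (transpose_mat A * 1\<^sub>m n * A)
        = of_int L \<cdot>\<^sub>m (transpose_mat Q * map_mat of_int (1\<^sub>m n) * Q)" by (rule sand) simp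
    also have "transpose_mat Q * map_mat (of_int :: int \<Rightarrow> rat) (1\<^sub>m n) * Q = 1\<^sub>m n"
      using Qc QQ by (simp add: of_int_hom.mat_hom_one)
    also have "transpose_mat A * 1\<^sub>m n * A = transpose_mat A * A" using A by simp
    finally have e: "map_mat (of_int :: int \<Rightarrow> rat) (transpose_mat A * A) = of_int L \<cdot>\<^sub>m 1\<^sub>m n" .
    have "(of_int ((transpose_mat A * A) $$ (i,j)) :: rat)
        = map_mat (of_int :: int \<Rightarrow> rat) (transpose_mat A * A) $$ (i,j)" using A ij' by simp
    also have "\<dots> = of_int ((L \<cdot>\<^sub>m 1\<^sub>m n) $$ (i,j))" unfolding e using ij' by simp
    finally show "(transpose_mat A * A) $$ (i,j) = (L \<cdot>\<^sub>m 1\<^sub>m n) $$ (i,j)"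
      by (simp only: of_int_eq_iff)
  qed (use A in auto)
  have dprop: "\<forall>i\<in>{1..n}. d i > 0 \<and> d i * d (Suc n - i) = L"
    by (rule snf_pair[OF A Lpos AA assms(5)])
  from assms(5) have ch: "\<forall>i. 1 \<le> i \<and> i < n \<longrightarrow> d i dvd d (Suc i)"
    and "\<exists>P R. unimodular n P \<and> unimodular n R \<and>
        P * A * R = Matrix.mat n n (\<lambda>(i,j). if i = j then d (Suc i) else 0)"
    unfolding smith_diag_def by auto
  then obtain P R where uP: "unimodular n P" and uR: "unimodular n R"
    and PAR: "P * A * R = diagm n (\<lambda>i. d (Suc i))" by (auto simp: diagm_def)
  obtain P' where P: "P \<in> carrier_mat n n" "P' \<in> carrier_mat n n" "P * P' = 1\<^sub>m n" "P' * P = 1\<^sub>m n"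
    using uP by (rule unimodularE)
  obtain R' where R: "R \<in> carrier_mat n n" "R' \<in> carrier_mat n n" "R * R' = 1\<^sub>m n" "R' * R = 1\<^sub>m n"
    using uR by (rule unimodularE)
  define D where "D = diagm n (\<lambda>i. d (Suc i))"
  have Aeq: "A = P' * D * R'"
  proof -
    have "P' * D * R' = P' * (P * (A * (R * R')))" unfolding D_def PAR[symmetric] using A P R by (simp add: assoc_n)
    also have "\<dots> = A" using A P R by (simp add: cancel_l)
    finally show ?thesis by simp
  qed
  define S where "S = {f \<in> PiE (pairs n) (\<lambda>_. {0..<L}). mz L n (transpose_mat A * symm n f * A)}"
  have cardS: "card S = (\<Prod>p\<in>pairs n. nat (gcd (d (Suc (fst p)) * d (Suc (snd p))) L))"
  proof -
    have "card S = card {g \<in> PiE (pairs n) (\<lambda>_. {0..<L}). mz L n (transpose_mat D * symm n g * D)}"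
      unfolding S_def Aeq by (rule count_sym[OF Lpos P(1,2) R(1,2)]) (use P R in \<open>auto simp: D_def\<close>)
    also have "\<dots> = (\<Prod>p\<in>pairs n. nat (gcd (d (Suc (fst p)) * d (Suc (snd p))) L))"
      unfolding D_def by (rule count_diag_sym[OF Lpos])
    finally show ?thesis .
  qed
  define Z where "Z = (\<lambda>(i,j) \<omega>. X \<omega> $$ (i,j) mod L)"
  have Zp: "Z p \<omega> = X \<omega> $$ p mod L" for p \<omega> by (cases p) (simp add: Z_def)
  have indep: "M.indep_vars (\<lambda>_. count_space UNIV) Z (pairs n)"
    using assms(9) unfolding Z_def L_def l_def pairs_def .
  have distr: "distr M (count_space UNIV) (Z p) = uniform_measure (count_space UNIV) {0..<L}"
    if "p \<in> pairs n" for p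
    using assms(10) that unfolding Z_def L_def l_def pairs_def by auto
  have measZ: "Z p \<in> measurable M (count_space UNIV)" if "p \<in> pairs n" for p
  proof -
    obtain i j where ij0: "p = (i,j)" by (cases p)
    have ij: "p = (i,j)" "i < n" "j < n" using that ij0 by (auto simp: pairs_def)
    have "(\<lambda>\<omega>. X \<omega> $$ (i,j)) \<in> measurable M (count_space UNIV)" using assms(8) ij by auto
    then have "(\<lambda>x. x mod L) \<circ> (\<lambda>\<omega>. X \<omega> $$ (i,j)) \<in> measurable M (count_space UNIV)"
      by (rule measurable_comp) simp
    then show ?thesis using ij by (simp add: Z_def o_def)
  qed
  have setsZ: "Z p -` {c} \<inter> space M \<in> sets M" if "p \<in> pairs n" for p c
    using measurable_sets[OF measZ[OF that], of "{c}"] by simp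
  have cardL: "card {0..<L} = nat L" by simp
  have pZ: "M.prob (Z p -` {c} \<inter> space M) = 1 / real_of_int L" if "p \<in> pairs n" "c \<in> {0..<L}" for p c
  proof -
    have "M.prob (Z p -` {c} \<inter> space M) = measure (distr M (count_space UNIV) (Z p)) {c}"
      by (rule measure_distr[symmetric, OF measZ[OF that(1)]]) simp
    also have "\<dots> = measure (uniform_measure (count_space UNIV) {0..<L}) {c}" by (simp add: distr[OF that(1)])
    also have "\<dots> = measure (count_space UNIV) ({0..<L} \<inter> {c}) / measure (count_space UNIV) {0..<L}"
      by (rule measure_uniform_measure) (use Lpos in \<open>auto simp: emeasure_count_space_finite\<close>)
    also have "\<dots> = 1 / real_of_int L" using that Lpos by (auto simp: measure_count_space)
    finally show ?thesis .
  qed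
  have pairs_ne: "pairs n \<noteq> {}" using assms(1) by (auto simp: pairs_def intro!: exI[of _ 0])
  have integ_iff: "integral_mat n (transpose_mat Q * map_mat of_int Y * Q) \<longleftrightarrow> mz L n (transpose_mat A * Y * A)"
    if Y: "Y \<in> carrier_mat n n" for Y
  proof -
    have "(transpose_mat Q * map_mat of_int Y * Q) $$ (i,j) \<in> \<int> \<longleftrightarrow> L dvd (transpose_mat A * Y * A) $$ (i,j)"
      if ij: "i < n" "j < n" for i j
    proof (rule int_entry[OF Lpos])
      have "(of_int ((transpose_mat A * Y * A) $$ (i,j)) :: rat)
          = map_mat (of_int :: int \<Rightarrow> rat) (transpose_mat A * Y * A) $$ (i,j)" using A Y ij by simp
      also have "\<dots> = (of_int L \<cdot>\<^sub>m (transpose_mat Q * map_mat of_int Y * Q)) $$ (i,j)"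
        unfolding sand[OF Y] ..
      also have "\<dots> = of_int L * (transpose_mat Q * map_mat of_int Y * Q) $$ (i,j)" using Qc Y ij by simp
      finally show "(of_int ((transpose_mat A * Y * A) $$ (i,j)) :: rat)
          = of_int L * (transpose_mat Q * map_mat of_int Y * Q) $$ (i,j)" .
    qed
    then show ?thesis unfolding integral_mat_def mz_def by auto
  qed
  have ev: "integral_mat n (transpose_mat Q * map_mat of_int (X \<omega>) * Q) \<longleftrightarrow> red L (pairs n) (X \<omega>) \<in> S"
    if "\<omega> \<in> space M" for \<omega>
  proof -
    have Xc: "X \<omega> \<in> carrier_mat n n" and Xs: "transpose_mat (X \<omega>) = X \<omega>" using assms(7) that by auto
    have "mc L n (symm n (red L (pairs n) (X \<omega>))) (X \<omega>)" by (rule mc_symm_red[OF Xc Xs])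
    then have "mc L n (transpose_mat A * symm n (red L (pairs n) (X \<omega>)) * A) (transpose_mat A * X \<omega> * A)"
      using A Xc by (intro mc_mult3) auto
    then have "mz L n (transpose_mat A * X \<omega> * A) \<longleftrightarrow> mz L n (transpose_mat A * symm n (red L (pairs n) (X \<omega>)) * A)"
      using mc_mz by blast
    then show ?thesis unfolding integ_iff[OF Xc] S_def using red_PiE[OF Lpos] by auto
  qed
  define B where "B f = (\<Inter>p\<in>pairs n. Z p -` {f p} \<inter> space M)" for f
  have Bsets: "B f \<in> sets M" for f
    unfolding B_def using pairs_ne setsZ by (intro sets.finite_INT) auto
  have evset: "{\<omega> \<in> space M. integral_mat n (transpose_mat Q * map_mat of_int (X \<omega>) * Q)} = (\<Union>f\<in>S. B f)"
  proof (intro Set.set_eqI iffI)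
    fix \<omega> assume "\<omega> \<in> {\<omega> \<in> space M. integral_mat n (transpose_mat Q * map_mat of_int (X \<omega>) * Q)}"
    then have w: "\<omega> \<in> space M" "red L (pairs n) (X \<omega>) \<in> S" using ev by auto
    have "\<omega> \<in> B (red L (pairs n) (X \<omega>))" using w(1) by (auto simp: B_def red_def Zp)
    then show "\<omega> \<in> (\<Union>f\<in>S. B f)" using w(2) by blast
  next
    fix \<omega> assume "\<omega> \<in> (\<Union>f\<in>S. B f)"
    then obtain f where f: "f \<in> S" "\<omega> \<in> B f" by blast
    have w: "\<omega> \<in> space M" using f(2) pairs_ne by (auto simp: B_def)
    have fP: "f \<in> PiE (pairs n) (\<lambda>_. {0..<L})" using f(1) by (simp add: S_def)
    have "red L (pairs n) (X \<omega>) = f"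
    proof (rule PiE_ext[OF red_PiE[OF Lpos] fP])
      fix p assume p: "p \<in> pairs n"
      have "\<omega> \<in> Z p -` {f p} \<inter> space M" using f(2) p unfolding B_def by blast
      then have "Z p \<omega> = f p" by simp
      then show "red L (pairs n) (X \<omega>) p = f p" using p by (simp add: red_def Zp)
    qed
    then show "\<omega> \<in> {\<omega> \<in> space M. integral_mat n (transpose_mat Q * map_mat of_int (X \<omega>) * Q)}"
      using w ev f(1) by auto
  qed
  have finS: "finite S" unfolding S_def by (rule finite_subset[of _ "PiE (pairs n) (\<lambda>_. {0..<L})"]) (auto intro: finite_PiE)
  have disj: "disjoint_family_on B S"
    unfolding disjoint_family_on_def
  proof (intro ballI impI)
    fix f g assume fg: "f \<in> S" "g \<in> S" "f \<noteq> g"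
    have fP: "f \<in> PiE (pairs n) (\<lambda>_. {0..<L})" "g \<in> PiE (pairs n) (\<lambda>_. {0..<L})" using fg by (auto simp: S_def)
    obtain p where p: "p \<in> pairs n" "f p \<noteq> g p" using PiE_ext[OF fP] fg(3) by blast
    show "B f \<inter> B g = {}" using p by (auto simp: B_def)
  qed
  have pB: "M.prob (B f) = (1 / real_of_int L) ^ card (pairs n)" if "f \<in> S" for f
  proof -
    have fP: "f \<in> PiE (pairs n) (\<lambda>_. {0..<L})" using that by (simp add: S_def)
    have "M.prob (B f) = (\<Prod>p\<in>pairs n. M.prob (Z p -` {f p} \<inter> space M))"
      unfolding B_def by (rule M.indep_varsD[OF indep pairs_ne]) auto
    also have "\<dots> = (\<Prod>p\<in>pairs n. 1 / real_of_int L)"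
      using fP by (intro prod.cong refl pZ) auto
    finally show ?thesis by simp
  qed
  have "M.prob {\<omega> \<in> space M. integral_mat n (transpose_mat Q * map_mat of_int (X \<omega>) * Q)}
      = (\<Sum>f\<in>S. M.prob (B f))"
    unfolding evset by (rule M.finite_measure_finite_Union[OF finS _ disj]) (use Bsets in auto)
  also have "\<dots> = real (card S) * (1 / real_of_int L) ^ card (pairs n)" using pB by simp
  also have "\<dots> = (\<Prod>p\<in>pairs n. real_of_int (gcd (d (Suc (fst p)) * d (Suc (snd p))) L) / real_of_int L)"
  proof -
    have "real (card S) = (\<Prod>p\<in>pairs n. real_of_int (gcd (d (Suc (fst p)) * d (Suc (snd p))) L))"
      unfolding cardS of_nat_prod by (intro prod.cong refl) simp
    then show ?thesis by (simp add: divide_inverse prod.distrib power_one_over)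
  qed
  also have "\<dots> = (\<Prod>p\<in>pairs n. if fst p + snd p + 2 \<le> n
        then real_of_int (d (Suc (fst p)) * d (Suc (snd p))) / real_of_int L else 1)"
  proof (rule prod.cong[OF refl])
    fix p assume p: "p \<in> pairs n"
    obtain i j where ij: "p = (i,j)" "i \<le> j" "j < n" using p by (auto simp: pairs_def)
    have g: "gcd (d (Suc i) * d (Suc j)) L = (if Suc i + Suc j \<le> n then d (Suc i) * d (Suc j) else L)"
      by (rule gcd_pair[OF dprop ch]) (use ij in auto)
    show "real_of_int (gcd (d (Suc (fst p)) * d (Suc (snd p))) L) / real_of_int L
        = (if fst p + snd p + 2 \<le> n then real_of_int (d (Suc (fst p)) * d (Suc (snd p))) / real_of_int L else 1)"
      using g ij Lpos by auto
  qed
  also have "\<dots> = (\<Prod>p\<in>{p\<in>pairs n. fst p + snd p + 2 \<le> n}.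
        real_of_int (d (Suc (fst p)) * d (Suc (snd p))) / real_of_int L)"
    by (rule prod.inter_filter[symmetric]) simp
  also have "\<dots> = (\<Prod>q\<in>Sigma {1..n div 2} (\<lambda>i. {i..n-i}).
        real_of_int (d (fst q) * d (snd q)) / real_of_int L)"
    by (rule prod.reindex_bij_witness[where i="\<lambda>q. (fst q - 1, snd q - 1)" and j="\<lambda>p. (Suc (fst p), Suc (snd p))"])
      (auto simp: pairs_def)
  also have "\<dots> = (\<Prod>i\<in>{1..n div 2}. \<Prod>j\<in>{i..n-i}. real_of_int (d i * d j) / real_of_int L)"
    by (subst prod.Sigma) (auto simp: split_def)
  also have "\<dots> = (\<Prod>i\<in>{1..n div 2}. \<Prod>j\<in>{i..n-i}. real_of_int (d i * d j) / real (level n Q)^2)"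
    unfolding L_def l_def by simp
  finally show ?thesis .
qed

end
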